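(* Let $k\in\mathbb{R}$, $r\in(0,\tfrac12\operatorname{diam}S^n_k]$, and let $D^n_k(r)\subset S^n_k$ be a closed disk of radius $r$. Let $\tilde p\in D^n_k(r)$ and $\tilde q\in\partial D^n_k(r)$ be points on a geodesic through the center of $D^n_k(r)$. Define $f:S^n_k\setminus\{\tilde q\}\to\mathbb{R}$ by $f(\tilde x)=\frac{m_k(|\tilde p\tilde x|)-m_k(|\tilde p\tilde q|)}{m_k(|\tilde q\tilde x|)}$. Then (1) $f(\tilde x)=\frac{m_k'(r-|\tilde p\tilde q|)}{m_k'(r)}$ for all $\tilde x\in\partial D^n_k(r)\setminus\{\tilde q\}$; and (2) if $B^n_k(r)$ denotes the interior of $D^n_k(r)$, then $f|_{B^n_k(r)}<\frac{m_k'(r-|\tilde p\tilde q|)}{m_k'(r)}<f|_{S^n_k\setminus D^n_k(r)}$.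
   Context: $S^n_k$ is the simply connected complete $n$-manifold of constant curvature $k$, $\operatorname{diam}S^n_k=\pi/\sqrt k$ if $k>0$ and $\infty$ otherwise; $|\tilde x\tilde y|$ is its distance. $m_k$ is the solution of $y''+ky=1$, $y(0)=y'(0)=0$: $m_k(t)=\frac1k(1-\cos\sqrt k t)$ ($k>0$), $t^2/2$ ($k=0$), $\frac1{|k|}(\cosh\sqrt{|k|}t-1)$ ($k<0$). Thus $\frac{m_k'(r-|\tilde p\tilde q|)}{m_k'(r)}$ equals $\sin(\sqrt k(r-|\tilde p\tilde q|))/\sin(\sqrt k r)$, $(r-|\tilde p\tilde q|)/r$, or $\sinh(\sqrt{|k|}(r-|\tilde p\tilde q|))/\sinh(\sqrt{|k|}r)$ according as $k>0,=0,<0$. *)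

theory Defs
  imports "HOL-Analysis.Analysis"
begin

text \<open>Concrete models of the space form S^n_k inside R^(n+1) = (real^'n) x real.
  k > 0: round sphere of radius 1/sqrt k;  k = 0: the hyperplane t = 0 (Euclidean R^n);
  k < 0: upper sheet of the hyperboloid in Minkowski space.\<close>

definition lor :: "((real^'n) \<times> real) \<Rightarrow> ((real^'n) \<times> real) \<Rightarrow> real" where
  "lor p q = fst p \<bullet> fst q - snd p * snd q"

definition space_form :: "real \<Rightarrow> ((real^'n) \<times> real) set" where
  "space_form k =
     (if k > 0 then {p. p \<bullet> p = 1 / k}
      else if k = 0 then {p. snd p = 0}
      else {p. lor p p = 1 / k \<and> snd p > 0})"

definition sf_dist :: "real \<Rightarrow> ((real^'n) \<times> real) \<Rightarrow> ((real^'n) \<times> real) \<Rightarrow> real" where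
  "sf_dist k p q =
     (if k > 0 then arccos (k * (p \<bullet> q)) / sqrt k
      else if k = 0 then dist p q
      else arcosh (k * lor p q) / sqrt (- k))"

definition sf_geodesic :: "real \<Rightarrow> (real \<Rightarrow> (real^'n) \<times> real) \<Rightarrow> bool" where
  "sf_geodesic k \<gamma> \<longleftrightarrow> (\<exists>c v. c \<in> space_form k \<and>
     (if k > 0 then c \<bullet> v = 0 \<and> v \<bullet> v = 1 \<and>
         \<gamma> = (\<lambda>s. cos (sqrt k * s) *\<^sub>R c + (sin (sqrt k * s) / sqrt k) *\<^sub>R v)
      else if k = 0 then snd v = 0 \<and> v \<bullet> v = 1 \<and> \<gamma> = (\<lambda>s. c + s *\<^sub>R v)
      else lor c v = 0 \<and> lor v v = 1 \<and>
         \<gamma> = (\<lambda>s. cosh (sqrt (- k) * s) *\<^sub>R c + (sinh (sqrt (- k) * s) / sqrt (- k)) *\<^sub>R v)))"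

text \<open>m_k: solution of y'' + k y = 1, y(0) = y'(0) = 0.\<close>
definition m_k :: "real \<Rightarrow> real \<Rightarrow> real" where
  "m_k k t =
     (if k > 0 then (1 - cos (sqrt k * t)) / k
      else if k = 0 then t\<^sup>2 / 2
      else (cosh (sqrt (- k) * t) - 1) / (- k))"

end

theory Submission
  imports Defs
begin


lemma final_step:
  fixes f :: "'a \<Rightarrow> real" and D h den :: "'a \<Rightarrow> real"
  assumes mu: "\<mu> > 0" and Dq: "D q = r"
   and fe: "\<And>x. x \<in> S \<Longrightarrow> x \<noteq> q \<Longrightarrow> f x - R = \<mu> * h x / den x"
   and dp: "\<And>x. x \<in> S \<Longrightarrow> x \<noteq> q \<Longrightarrow> den x > 0"
   and lt: "\<And>x. x \<in> S \<Longrightarrow> D x < r \<longleftrightarrow> h x < 0"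
   and gt: "\<And>x. x \<in> S \<Longrightarrow> D x > r \<longleftrightarrow> h x > 0"
  shows "(\<forall>x\<in>S. D x = r \<and> x \<noteq> q \<longrightarrow> f x = R)
       \<and> (\<forall>x\<in>S. D x < r \<longrightarrow> f x < R)
       \<and> (\<forall>x\<in>S. D x > r \<longrightarrow> R < f x)"
proof (intro conjI ballI impI)
  fix x assume x: "x \<in> S" and "D x = r \<and> x \<noteq> q"
  then have "h x = 0" using lt[OF x] gt[OF x] by auto
  then show "f x = R" using fe[OF x] \<open>D x = r \<and> x \<noteq> q\<close> by auto
next
  fix x assume x: "x \<in> S" and "D x < r"
  then have xq: "x \<noteq> q" using Dq by auto
  have "h x < 0" using lt[OF x] \<open>D x < r\<close> by auto
  then have "\<mu> * h x / den x < 0" using mu dp[OF x xq] by (simp add: divide_neg_pos mult_pos_neg)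
  then show "f x < R" using fe[OF x xq] by linarith
next
  fix x assume x: "x \<in> S" and "D x > r"
  then have xq: "x \<noteq> q" using Dq by auto
  have "h x > 0" using gt[OF x] \<open>D x > r\<close> by auto
  then have "\<mu> * h x / den x > 0" using mu dp[OF x xq] by simp
  then show "R < f x" using fe[OF x xq] by linarith
qed



lemma sphere_case:
  fixes k r :: real and c p q :: "(real^'n) \<times> real"
  assumes k: "k > 0" and r_pos: "r > 0"
    and r_le: "r \<le> pi / (2 * sqrt k)"
    and c_in: "c \<in> space_form k"
    and p_in: "p \<in> space_form k"
    and q_in: "q \<in> space_form k"
    and p_disk: "sf_dist k c p \<le> r"
    and q_bdry: "sf_dist k c q = r"
    and geod: "\<exists>\<gamma>. sf_geodesic k \<gamma> \<and> c \<in> range \<gamma> \<and> p \<in> range \<gamma> \<and> q \<in> range \<gamma>"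
    and p_ne_q: "p \<noteq> q"
    and not_antipodal: "sf_dist k p q \<noteq> pi / sqrt k"
  defines "f \<equiv> (\<lambda>x. (m_k k (sf_dist k p x) - m_k k (sf_dist k p q)) / m_k k (sf_dist k q x))"
    and "R \<equiv> deriv (m_k k) (r - sf_dist k p q) / deriv (m_k k) r"
  shows "(\<forall>x\<in>space_form k. sf_dist k c x = r \<and> x \<noteq> q \<longrightarrow> f x = R)
       \<and> (\<forall>x\<in>space_form k. sf_dist k c x < r \<longrightarrow> f x < R)
       \<and> (\<forall>x\<in>space_form k. sf_dist k c x > r \<longrightarrow> R < f x)"
proof -
  define s where "s = sqrt k"
  have s: "s > 0" "s * s = k" using k by (auto simp: s_def)
  have S: "\<And>x. x \<in> space_form k \<longleftrightarrow> x \<bullet> x = 1 / k" using k by (simp add: space_form_def)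
  have dist: "\<And>x y. sf_dist k x y = arccos (k * (x \<bullet> y)) / s" using k by (simp add: sf_dist_def s_def)
  have cs: "\<bar>k * (x \<bullet> y)\<bar> \<le> 1" if "x \<in> space_form k" "y \<in> space_form k" for x y
  proof -
    have "\<bar>x \<bullet> y\<bar> \<le> norm x * norm y" by (rule Cauchy_Schwarz_ineq2)
    have "x \<bullet> x = 1/k" "y \<bullet> y = 1/k" using that S by blast+
    then have "norm x * norm y = sqrt (1/k) * sqrt (1/k)" by (simp add: norm_eq_sqrt_inner)
    also have "\<dots> = 1/k" using k by simp
    finally have "\<bar>x \<bullet> y\<bar> \<le> 1/k" using \<open>\<bar>x \<bullet> y\<bar> \<le> norm x * norm y\<close> by simp
    then show ?thesis using k by (simp add: abs_mult field_simps)
  qed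
  have mk: "\<And>t. m_k k t = (1 - cos (s * t)) / k" using k by (simp add: m_k_def s_def)
  have mdist: "m_k k (sf_dist k x y) = 1/k - x \<bullet> y" if "x \<in> space_form k" "y \<in> space_form k" for x y
  proof -
    have "s * sf_dist k x y = arccos (k * (x \<bullet> y))" using s by (simp add: dist)
    then have "cos (s * sf_dist k x y) = k * (x \<bullet> y)" using cs[OF that] by simp
    then show ?thesis using k by (simp add: mk field_simps)
  qed
  have dm: "deriv (m_k k) t = sin (s * t) / s" for t
  proof -
    have "m_k k = (\<lambda>t. (1 - cos (s * t)) / k)" using mk by auto
    moreover have "((\<lambda>t. (1 - cos (s * t)) / k) has_real_derivative sin (s * t) / s) (at t)"
      using s by (auto intro!: derivative_eq_intros simp: field_simps simp flip: s(2))
    ultimately show ?thesis by (simp add: DERIV_imp_deriv)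
  qed

  obtain \<gamma> where g: "sf_geodesic k \<gamma>" and cr: "c \<in> range \<gamma>" and pr: "p \<in> range \<gamma>" and qr: "q \<in> range \<gamma>"
    using geod by blast
  obtain c0 v where c0: "c0 \<in> space_form k" and c0v: "c0 \<bullet> v = 0" and vv: "v \<bullet> v = 1"
    and \<gamma>: "\<gamma> = (\<lambda>t. cos (s * t) *\<^sub>R c0 + (sin (s * t) / s) *\<^sub>R v)"
    using g k unfolding sf_geodesic_def s_def by auto
  obtain a b e where ca: "c = \<gamma> a" and pb: "p = \<gamma> b" and qe: "q = \<gamma> e" using cr pr qr by blast
  have c00: "c0 \<bullet> c0 = 1/k" using c0 S by blast
  have vc0: "v \<bullet> c0 = 0" using c0v by (simp add: inner_commute)
  have gi: "\<gamma> x \<bullet> \<gamma> y = cos (s*x - s*y) / k" for x y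
  proof -
    have "\<gamma> x \<bullet> \<gamma> y = cos (s * x) * cos (s * y) / k + sin (s * x) * sin (s * y) / (s * s)"
      unfolding \<gamma> by (simp add: inner_add_left inner_add_right c00 c0v vc0 vv mult.commute)
    also have "\<dots> = cos (s*x - s*y) / k" using s by (simp add: cos_diff add_divide_distrib)
    finally show ?thesis .
  qed
  define \<alpha> where "\<alpha> = s * a"
  define \<phi> where "\<phi> = s * b - s * a"
  define \<theta> where "\<theta> = s * e - s * a"
  define \<rho> where "\<rho> = s * r"
  have \<rho>pos: "\<rho> > 0" using s r_pos by (simp add: \<rho>_def)
  have \<rho>le: "\<rho> \<le> pi / 2"
  proof -
    have "\<rho> \<le> s * (pi / (2 * s))" unfolding \<rho>_def using r_le s by (intro mult_left_mono) (auto simp: s_def)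
    then show ?thesis using s by simp
  qed
  have sr_pos: "sin \<rho> > 0" using \<rho>pos \<rho>le by (intro sin_gt_zero) auto
  have cq: "arccos (cos \<theta>) = \<rho>"
  proof -
    have "arccos (k * (\<gamma> a \<bullet> \<gamma> e)) / s = r" using q_bdry by (simp add: dist ca qe)
    moreover have "k * (\<gamma> a \<bullet> \<gamma> e) = cos \<theta>" using k by (simp add: gi \<theta>_def cos_diff mult.commute)
    ultimately show ?thesis using s by (simp add: \<rho>_def field_simps)
  qed
  have cth: "cos \<theta> = cos \<rho>" using cq by (metis cos_arccos cos_ge_minus_one cos_le_one)
  have "(sin \<theta>)\<^sup>2 = (sin \<rho>)\<^sup>2" using cth by (simp add: sin_squared_eq)
  then have sth: "sin \<theta> = sin \<rho> \<or> sin \<theta> = - sin \<rho>" by (simp add: power2_eq_iff)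
  define \<delta> where "\<delta> = (if sin \<theta> = sin \<rho> then 1 else -1::real)"
  have \<delta>: "sin \<theta> = \<delta> * sin \<rho>" "\<delta> * \<delta> = 1" "\<bar>\<delta>\<bar> = 1" using sth by (auto simp: \<delta>_def)
  have cp: "arccos (cos \<phi>) \<le> \<rho>"
  proof -
    have "arccos (k * (\<gamma> a \<bullet> \<gamma> b)) / s \<le> r" using p_disk by (simp add: dist ca pb)
    moreover have "k * (\<gamma> a \<bullet> \<gamma> b) = cos \<phi>" using k by (simp add: gi \<phi>_def cos_diff mult.commute)
    ultimately show ?thesis using s by (simp add: \<rho>_def field_simps)
  qed
  define t where "t = arccos (cos \<phi>)"
  have t: "0 \<le> t" "t \<le> \<rho>" "cos t = cos \<phi>" "sin t = \<bar>sin \<phi>\<bar>"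
  proof -
    show "0 \<le> t" unfolding t_def by (simp add: arccos_lbound)
    show "t \<le> \<rho>" using cp t_def by simp
    show "cos t = cos \<phi>" unfolding t_def by simp
    have "sin t = sqrt (1 - (cos \<phi>)\<^sup>2)" unfolding t_def by (simp add: sin_arccos)
    also have "\<dots> = sqrt ((sin \<phi>)\<^sup>2)" by (simp add: cos_squared_eq)
    finally show "sin t = \<bar>sin \<phi>\<bar>" by simp
  qed
  define \<sigma> where "\<sigma> = (if \<delta> * sin \<phi> \<ge> 0 then t else - t)"
  have \<sigma>: "cos \<sigma> = cos \<phi>" "sin \<sigma> = \<delta> * sin \<phi>" "- \<rho> \<le> \<sigma>" "\<sigma> \<le> \<rho>"
  proof -
    show "cos \<sigma> = cos \<phi>" using t by (simp add: \<sigma>_def)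
    show "- \<rho> \<le> \<sigma>" "\<sigma> \<le> \<rho>" using t \<rho>pos by (auto simp: \<sigma>_def)
    have "\<bar>\<delta> * sin \<phi>\<bar> = \<bar>sin \<phi>\<bar>" using \<delta> by (simp add: abs_mult)
    then show "sin \<sigma> = \<delta> * sin \<phi>" using t by (auto simp: \<sigma>_def)
  qed
  have sp: "sin \<phi> = \<delta> * sin \<sigma>" using \<sigma>(2) \<delta>(2) by (metis mult.assoc mult_1)
  have cpq: "cos (\<phi> - \<theta>) = cos (\<rho> - \<sigma>)"
    by (simp add: cos_diff \<sigma>(1)[symmetric] cth \<delta>(1) sp) (metis \<delta>(2) mult.commute mult.left_commute mult_1)
  have d: "s * sf_dist k p q = \<rho> - \<sigma>"
  proof -
    have "k * (\<gamma> b \<bullet> \<gamma> e) = cos (\<phi> - \<theta>)" using k by (simp add: gi \<phi>_def \<theta>_def)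
    then have "s * sf_dist k p q = arccos (cos (\<rho> - \<sigma>))" using s by (simp add: dist pb qe cpq)
    also have "\<dots> = \<rho> - \<sigma>" using \<sigma> \<rho>le by (intro arccos_cos) auto
    finally show ?thesis .
  qed
  have sne: "\<sigma> \<noteq> \<rho>"
  proof
    assume "\<sigma> = \<rho>"
    then have "cos \<phi> = cos \<theta>" "sin \<phi> = sin \<theta>" using \<sigma>(1) cth sp \<delta>(1) by auto
    then have "cos (s*b) = cos (s*e)" "sin (s*b) = sin (s*e)"
      using cos_add[of \<alpha> \<phi>] cos_add[of \<alpha> \<theta>] sin_add[of \<alpha> \<phi>] sin_add[of \<alpha> \<theta>]
      by (simp_all add: \<alpha>_def \<phi>_def \<theta>_def)
    then have "p = q" by (simp add: pb qe \<gamma>)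
    then show False using p_ne_q by simp
  qed
  have na: "\<rho> - \<sigma> \<noteq> pi" using not_antipodal d s by (auto simp: field_simps)
  define \<mu> where "\<mu> = sin (\<rho> - \<sigma>) / sin \<rho>"
  have \<mu>: "\<mu> > 0" unfolding \<mu>_def using sne na \<sigma> \<rho>le sr_pos by (intro divide_pos_pos sin_gt_zero) auto
  have R: "R = sin \<sigma> / sin \<rho>"
  proof -
    have "s * (r - sf_dist k p q) = \<sigma>" using d by (simp add: right_diff_distrib \<rho>_def)
    then show ?thesis unfolding R_def dm using s by (simp add: \<rho>_def)
  qed
  have co: "cos (\<alpha> + \<phi>) - R * cos (\<alpha> + \<theta>) = \<mu> * cos \<alpha>"
    using sr_pos \<delta>(2) by (simp add: R \<mu>_def cos_add sin_diff \<sigma>(1)[symmetric] sp cth \<delta>(1) field_simps)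
  have si: "sin (\<alpha> + \<phi>) - R * sin (\<alpha> + \<theta>) = \<mu> * sin \<alpha>"
    using sr_pos \<delta>(2) by (simp add: R \<mu>_def sin_add sin_diff \<sigma>(1)[symmetric] sp cth \<delta>(1) field_simps)
  have vec: "p - R *\<^sub>R q = \<mu> *\<^sub>R c"
  proof -
    have sb: "s * b = \<alpha> + \<phi>" and se: "s * e = \<alpha> + \<theta>" by (simp_all add: \<alpha>_def \<phi>_def \<theta>_def)
    have "p - R *\<^sub>R q = (cos (\<alpha> + \<phi>) - R * cos (\<alpha> + \<theta>)) *\<^sub>R c0 + ((sin (\<alpha> + \<phi>) - R * sin (\<alpha> + \<theta>)) / s) *\<^sub>R v"
    proof -
      have "p = cos (\<alpha> + \<phi>) *\<^sub>R c0 + (sin (\<alpha> + \<phi>) / s) *\<^sub>R v" by (simp add: pb \<gamma> sb)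
      moreover have "q = cos (\<alpha> + \<theta>) *\<^sub>R c0 + (sin (\<alpha> + \<theta>) / s) *\<^sub>R v" by (simp add: qe \<gamma> se)
      ultimately show ?thesis by (simp add: algebra_simps diff_divide_distrib)
    qed
    also have "\<dots> = (\<mu> * cos \<alpha>) *\<^sub>R c0 + ((\<mu> * sin \<alpha>) / s) *\<^sub>R v" by (simp only: co si)
    also have "\<dots> = \<mu> *\<^sub>R c" by (simp add: ca \<gamma> \<alpha>_def scaleR_add_right)
    finally show ?thesis .
  qed
  have qq: "q \<bullet> q = 1/k" using q_in S by blast
  have key: "1/k - q \<bullet> x > 0 \<and> f x - R = \<mu> * (c \<bullet> q - c \<bullet> x) / (1/k - q \<bullet> x)"
    if x: "x \<in> space_form k" and xq: "x \<noteq> q" for x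
  proof -
    have xx: "x \<bullet> x = 1/k" using x S by blast
    from xq have "0 < (q - x) \<bullet> (q - x)" by simp
    also have "(q - x) \<bullet> (q - x) = 2 * (1/k - q \<bullet> x)"
      using xx qq by (simp add: inner_diff_left inner_diff_right inner_commute)
    finally have dpos: "1/k - q \<bullet> x > 0" by simp
    have "f x = (p \<bullet> q - p \<bullet> x) / (1/k - q \<bullet> x)"
      unfolding f_def using x p_in q_in by (simp add: mdist)
    then have "f x - R = (p \<bullet> q - p \<bullet> x - R * (q \<bullet> q - q \<bullet> x)) / (1/k - q \<bullet> x)"
      using dpos qq by (simp add: field_simps)
    also have "p \<bullet> q - p \<bullet> x - R * (q \<bullet> q - q \<bullet> x) = (p - R *\<^sub>R q) \<bullet> (q - x)"
      by (simp add: inner_diff_left inner_diff_right algebra_simps)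
    also have "\<dots> = \<mu> * (c \<bullet> q - c \<bullet> x)" by (simp add: vec inner_diff_right algebra_simps)
    finally show ?thesis using dpos by simp
  qed
  have cmp: "(sf_dist k c x < r \<longleftrightarrow> c \<bullet> q - c \<bullet> x < 0) \<and> (sf_dist k c x > r \<longleftrightarrow> c \<bullet> q - c \<bullet> x > 0)"
    if x: "x \<in> space_form k" for x
  proof
    have rr: "r = arccos (k * (c \<bullet> q)) / s" using q_bdry by (simp add: dist)
    have A: "\<bar>k * (c \<bullet> x)\<bar> \<le> 1" "\<bar>k * (c \<bullet> q)\<bar> \<le> 1"
      by (rule cs[OF c_in x], rule cs[OF c_in q_in])
    have "sf_dist k c x < r \<longleftrightarrow> arccos (k * (c \<bullet> x)) < arccos (k * (c \<bullet> q))"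
      using s(1) by (simp add: rr dist divide_less_cancel)
    also have "\<dots> \<longleftrightarrow> k * (c \<bullet> q) < k * (c \<bullet> x)" using A by (rule arccos_less_mono)
    also have "\<dots> \<longleftrightarrow> c \<bullet> q - c \<bullet> x < 0" using k by simp
    finally show "sf_dist k c x < r \<longleftrightarrow> c \<bullet> q - c \<bullet> x < 0" .
    have "sf_dist k c x > r \<longleftrightarrow> arccos (k * (c \<bullet> q)) < arccos (k * (c \<bullet> x))"
      using s(1) by (simp add: rr dist divide_less_cancel)
    also have "\<dots> \<longleftrightarrow> k * (c \<bullet> x) < k * (c \<bullet> q)" using A by (intro arccos_less_mono) auto
    also have "\<dots> \<longleftrightarrow> c \<bullet> q - c \<bullet> x > 0" using k by simp
    finally show "sf_dist k c x > r \<longleftrightarrow> c \<bullet> q - c \<bullet> x > 0" .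
  qed
  show ?thesis
    by (rule final_step[where \<mu>=\<mu> and h="\<lambda>x. c \<bullet> q - c \<bullet> x" and den="\<lambda>x. 1/k - q \<bullet> x"])
      (use \<mu> q_bdry key cmp in auto)
qed



lemma lor_add_left: "lor (x + y) z = lor x z + lor y z"
  by (simp add: lor_def inner_add_left algebra_simps)
lemma lor_add_right: "lor z (x + y) = lor z x + lor z y"
  by (simp add: lor_def inner_add_right algebra_simps)
lemma lor_diff_left: "lor (x - y) z = lor x z - lor y z"
  by (simp add: lor_def inner_diff_left algebra_simps)
lemma lor_diff_right: "lor z (x - y) = lor z x - lor z y"
  by (simp add: lor_def inner_diff_right algebra_simps)
lemma lor_scaleR_left: "lor (a *\<^sub>R x) z = a * lor x z"
  by (simp add: lor_def algebra_simps)
lemma lor_scaleR_right: "lor z (a *\<^sub>R x) = a * lor z x"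
  by (simp add: lor_def algebra_simps)
lemma lor_commute: "lor x y = lor y x"
  by (simp add: lor_def inner_commute mult.commute)

lemmas lor_simps = lor_add_left lor_add_right lor_diff_left lor_diff_right lor_scaleR_left lor_scaleR_right

lemma hyp_sep:
  fixes x y :: "(real^'n) \<times> real"
  assumes k: "k < 0" and xx: "lor x x = 1/k" and yy: "lor y y = 1/k" and xp: "snd x > 0" and yp: "snd y > 0"
  shows "lor (x - y) (x - y) \<ge> 0" and "x \<noteq> y \<Longrightarrow> lor (x - y) (x - y) > 0"
proof -
  obtain X a where x: "x = (X, a)" by (cases x)
  obtain Y b where y: "y = (Y, b)" by (cases y)
  define A where "A = - 1 / k"
  have A: "A > 0" using k by (simp add: A_def)
  have a: "a > 0" and b: "b > 0" using xp yp x y by auto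
  have XX: "X \<bullet> X = a\<^sup>2 - A" using xx x by (simp add: lor_def A_def power2_eq_square)
  have YY: "Y \<bullet> Y = b\<^sup>2 - A" using yy y by (simp add: lor_def A_def power2_eq_square)
  have aA: "a\<^sup>2 \<ge> A" using XX by (metis diff_ge_0_iff_ge inner_ge_zero)
  have bA: "b\<^sup>2 \<ge> A" using YY by (metis diff_ge_0_iff_ge inner_ge_zero)
  have XY: "X \<bullet> Y \<le> sqrt ((a\<^sup>2 - A) * (b\<^sup>2 - A))"
  proof -
    have "X \<bullet> Y \<le> norm X * norm Y" using Cauchy_Schwarz_ineq2[of X Y] by linarith
    also have "\<dots> = sqrt ((a\<^sup>2 - A) * (b\<^sup>2 - A))" by (simp add: norm_eq_sqrt_inner XX YY real_sqrt_mult)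
    finally show ?thesis .
  qed
  have L: "lor (x - y) (x - y) = a\<^sup>2 - A + (b\<^sup>2 - A) - 2 * (X \<bullet> Y) - (a - b)\<^sup>2"
    using XX YY x y by (simp add: lor_def inner_diff_left inner_diff_right inner_commute power2_eq_square)
  have ab: "a * b \<ge> A"
  proof -
    have "sqrt A \<le> a" using aA a real_le_lsqrt by (metis less_imp_le real_sqrt_le_mono real_sqrt_abs abs_of_pos)
    moreover have "sqrt A \<le> b" using bA b by (metis less_imp_le real_sqrt_le_mono real_sqrt_abs abs_of_pos)
    ultimately have "sqrt A * sqrt A \<le> a * b" using a A by (intro mult_mono) auto
    then show ?thesis using A by simp
  qed
  have E: "(a * b - A)\<^sup>2 = (a\<^sup>2 - A) * (b\<^sup>2 - A) + A * (a - b)\<^sup>2"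
    by (simp add: power2_eq_square algebra_simps)
  have S1: "sqrt ((a\<^sup>2 - A) * (b\<^sup>2 - A)) \<le> a * b - A"
  proof -
    have "sqrt ((a\<^sup>2 - A) * (b\<^sup>2 - A)) \<le> sqrt ((a * b - A)\<^sup>2)"
      using E A by (intro real_sqrt_le_mono) (simp add: )
    then show ?thesis using ab by simp
  qed
  show "lor (x - y) (x - y) \<ge> 0" using L XY S1 by (simp add: power2_eq_square algebra_simps)
  assume "x \<noteq> y"
  show "lor (x - y) (x - y) > 0"
  proof (cases "a = b")
    case True
    then have "X \<noteq> Y" using \<open>x \<noteq> y\<close> x y by auto
    then have "0 < (X - Y) \<bullet> (X - Y)" by simp
    then show ?thesis using True x y by (simp add: lor_def)
  next
    case False
    have "sqrt ((a\<^sup>2 - A) * (b\<^sup>2 - A)) < sqrt ((a * b - A)\<^sup>2)"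
      using E A False by (intro real_sqrt_less_mono) simp
    then have "sqrt ((a\<^sup>2 - A) * (b\<^sup>2 - A)) < a * b - A" using ab by simp
    then show ?thesis using L XY by (simp add: power2_eq_square algebra_simps)
  qed
qed



lemma hyp_case:
  fixes k r :: real and c p q :: "(real^'n) \<times> real"
  assumes k: "k < 0" and r_pos: "r > 0"
    and c_in: "c \<in> space_form k"
    and p_in: "p \<in> space_form k"
    and q_in: "q \<in> space_form k"
    and p_disk: "sf_dist k c p \<le> r"
    and q_bdry: "sf_dist k c q = r"
    and geod: "\<exists>\<gamma>. sf_geodesic k \<gamma> \<and> c \<in> range \<gamma> \<and> p \<in> range \<gamma> \<and> q \<in> range \<gamma>"
    and p_ne_q: "p \<noteq> q"
  defines "f \<equiv> (\<lambda>x. (m_k k (sf_dist k p x) - m_k k (sf_dist k p q)) / m_k k (sf_dist k q x))"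
    and "R \<equiv> deriv (m_k k) (r - sf_dist k p q) / deriv (m_k k) r"
  shows "(\<forall>x\<in>space_form k. sf_dist k c x = r \<and> x \<noteq> q \<longrightarrow> f x = R)
       \<and> (\<forall>x\<in>space_form k. sf_dist k c x < r \<longrightarrow> f x < R)
       \<and> (\<forall>x\<in>space_form k. sf_dist k c x > r \<longrightarrow> R < f x)"
proof -
  define s where "s = sqrt (- k)"
  have s: "s > 0" "s * s = - k" using k by (auto simp: s_def)
  have S: "\<And>x. x \<in> space_form k \<longleftrightarrow> lor x x = 1 / k \<and> snd x > 0" using k by (simp add: space_form_def)
  have dist: "\<And>x y. sf_dist k x y = arcosh (k * lor x y) / s" using k by (simp add: sf_dist_def s_def)
  have sep: "lor (x - y) (x - y) \<ge> 0" "x \<noteq> y \<Longrightarrow> lor (x - y) (x - y) > 0"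
    if "x \<in> space_form k" "y \<in> space_form k" for x y
  proof -
    have "lor x x = 1/k" "snd x > 0" "lor y y = 1/k" "snd y > 0" using that S by blast+
    then show "lor (x - y) (x - y) \<ge> 0" "x \<noteq> y \<Longrightarrow> lor (x - y) (x - y) > 0"
      using hyp_sep[OF k] by blast+
  qed
  have lxy: "lor (x - y) (x - y) = 2/k - 2 * lor x y" if "x \<in> space_form k" "y \<in> space_form k" for x y
  proof -
    have "lor x x = 1/k" "lor y y = 1/k" using that S by blast+
    then show ?thesis by (simp add: lor_simps lor_commute[of y x])
  qed
  have cs: "k * lor x y \<ge> 1" if "x \<in> space_form k" "y \<in> space_form k" for x y
  proof -
    have "lor x y \<le> 1/k" using sep(1)[OF that] lxy[OF that] by simp
    then have "k * lor x y \<ge> k * (1/k)" using k by (intro mult_left_mono_neg) auto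
    then show ?thesis using k by simp
  qed
  have mk: "\<And>t. m_k k t = (cosh (s * t) - 1) / (- k)" using k by (simp add: m_k_def s_def)
  have mdist: "m_k k (sf_dist k x y) = 1/k - lor x y" if "x \<in> space_form k" "y \<in> space_form k" for x y
  proof -
    have "s * sf_dist k x y = arcosh (k * lor x y)" using s by (simp add: dist)
    then have "cosh (s * sf_dist k x y) = k * lor x y" using cs[OF that] by simp
    then show ?thesis using k by (simp add: mk field_simps)
  qed
  have dm: "deriv (m_k k) t = sinh (s * t) / s" for t
  proof -
    have "m_k k = (\<lambda>t. (cosh (s * t) - 1) / (- k))" using mk by auto
    moreover have "((\<lambda>t. (cosh (s * t) - 1) / (- k)) has_real_derivative sinh (s * t) / s) (at t)"
      using s by (auto intro!: derivative_eq_intros simp: field_simps simp flip: s(2))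
    ultimately show ?thesis by (simp add: DERIV_imp_deriv)
  qed
  obtain \<gamma> where g: "sf_geodesic k \<gamma>" and cr: "c \<in> range \<gamma>" and pr: "p \<in> range \<gamma>" and qr: "q \<in> range \<gamma>"
    using geod by blast
  obtain c0 v where c0: "c0 \<in> space_form k" and c0v: "lor c0 v = 0" and vv: "lor v v = 1"
    and \<gamma>: "\<gamma> = (\<lambda>t. cosh (s * t) *\<^sub>R c0 + (sinh (s * t) / s) *\<^sub>R v)"
    using g k unfolding sf_geodesic_def s_def by auto
  obtain a b e where ca: "c = \<gamma> a" and pb: "p = \<gamma> b" and qe: "q = \<gamma> e" using cr pr qr by blast
  have c00: "lor c0 c0 = 1/k" using c0 S by blast
  have vc0: "lor v c0 = 0" using c0v by (simp add: lor_commute)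
  have gi: "k * lor (\<gamma> x) (\<gamma> y) = cosh (s * x - s * y)" for x y
  proof -
    have "lor (\<gamma> x) (\<gamma> y) = cosh (s * x) * cosh (s * y) / k + sinh (s * x) * sinh (s * y) / (s * s)"
      unfolding \<gamma> by (simp add: lor_simps c00 c0v vc0 vv mult.commute)
    also have "\<dots> = cosh (s * x - s * y) / k" using s k by (simp add: cosh_diff diff_divide_distrib)
    finally show ?thesis using k by simp
  qed
  define \<alpha> where "\<alpha> = s * a"
  define \<phi> where "\<phi> = s * b - s * a"
  define \<theta> where "\<theta> = s * e - s * a"
  define \<rho> where "\<rho> = s * r"
  have \<rho>pos: "\<rho> > 0" using s r_pos by (simp add: \<rho>_def)
  have sr_pos: "sinh \<rho> > 0" using \<rho>pos by simp
  have ach: "arcosh (cosh z) = \<bar>z\<bar>" for z :: real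
  proof -
    have "arcosh (cosh \<bar>z\<bar>) = \<bar>z\<bar>" by (rule arcosh_cosh_real) simp
    then show ?thesis by simp
  qed
  have cq: "\<bar>\<theta>\<bar> = \<rho>"
  proof -
    have "arcosh (k * lor (\<gamma> a) (\<gamma> e)) / s = r" using q_bdry by (simp add: dist ca qe)
    moreover have "k * lor (\<gamma> a) (\<gamma> e) = cosh \<theta>" using cosh_minus[of \<theta>] by (simp add: gi \<theta>_def)
    ultimately show ?thesis using s by (simp add: \<rho>_def field_simps ach)
  qed
  have cp: "\<bar>\<phi>\<bar> \<le> \<rho>"
  proof -
    have "arcosh (k * lor (\<gamma> a) (\<gamma> b)) / s \<le> r" using p_disk by (simp add: dist ca pb)
    moreover have "k * lor (\<gamma> a) (\<gamma> b) = cosh \<phi>" using cosh_minus[of \<phi>] by (simp add: gi \<phi>_def)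
    ultimately show ?thesis using s by (simp add: \<rho>_def field_simps ach)
  qed
  define \<delta> where "\<delta> = (if \<theta> \<ge> 0 then 1 else -1::real)"
  have \<delta>: "\<theta> = \<delta> * \<rho>" "\<delta> * \<delta> = 1" using cq by (auto simp: \<delta>_def)
  define \<sigma> where "\<sigma> = \<delta> * \<phi>"
  have \<phi>: "\<phi> = \<delta> * \<sigma>" using \<delta>(2) by (simp add: \<sigma>_def mult.assoc[symmetric])
  have \<sigma>b: "\<bar>\<sigma>\<bar> \<le> \<rho>" using cp by (auto simp: \<sigma>_def \<delta>_def abs_mult)
  have hy: "cosh \<phi> = cosh \<sigma>" "sinh \<phi> = \<delta> * sinh \<sigma>" "cosh \<theta> = cosh \<rho>" "sinh \<theta> = \<delta> * sinh \<rho>"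
  proof -
    have "\<delta> = 1 \<or> \<delta> = -1" by (simp add: \<delta>_def)
    then show "cosh \<phi> = cosh \<sigma>" "sinh \<phi> = \<delta> * sinh \<sigma>" "cosh \<theta> = cosh \<rho>" "sinh \<theta> = \<delta> * sinh \<rho>"
      by (auto simp: \<phi> \<delta>(1))
  qed
  have d: "s * sf_dist k p q = \<rho> - \<sigma>"
  proof -
    have "k * lor (\<gamma> b) (\<gamma> e) = cosh (\<phi> - \<theta>)" by (simp add: gi \<phi>_def \<theta>_def)
    then have "s * sf_dist k p q = \<bar>\<phi> - \<theta>\<bar>" using s by (simp add: dist pb qe ach)
    also have "\<phi> - \<theta> = \<delta> * (\<sigma> - \<rho>)" by (simp add: \<phi> \<delta>(1) algebra_simps)
    also have "\<bar>\<dots>\<bar> = \<rho> - \<sigma>"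
    proof -
      have "\<bar>\<delta>\<bar> = 1" by (simp add: \<delta>_def)
      then show ?thesis using \<sigma>b by (simp add: abs_mult)
    qed
    finally show ?thesis .
  qed
  have sne: "\<sigma> \<noteq> \<rho>"
  proof
    assume "\<sigma> = \<rho>"
    then have "\<phi> = \<theta>" by (simp add: \<phi> \<delta>(1))
    then have "s * b = s * e" by (simp add: \<phi>_def \<theta>_def)
    then have "b = e" using s by simp
    then have "p = q" by (simp add: pb qe)
    then show False using p_ne_q by simp
  qed
  define \<mu> where "\<mu> = sinh (\<rho> - \<sigma>) / sinh \<rho>"
  have \<mu>: "\<mu> > 0" unfolding \<mu>_def using sne \<sigma>b sr_pos by (intro divide_pos_pos) auto
  have R: "R = sinh \<sigma> / sinh \<rho>"
  proof -
    have "s * (r - sf_dist k p q) = \<sigma>" using d by (simp add: right_diff_distrib \<rho>_def)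
    then show ?thesis unfolding R_def dm using s by (simp add: \<rho>_def)
  qed
  have co: "cosh (\<alpha> + \<phi>) - R * cosh (\<alpha> + \<theta>) = \<mu> * cosh \<alpha>"
    using sr_pos \<delta>(2) by (simp add: R \<mu>_def cosh_add sinh_diff hy field_simps)
  have si: "sinh (\<alpha> + \<phi>) - R * sinh (\<alpha> + \<theta>) = \<mu> * sinh \<alpha>"
    using sr_pos \<delta>(2) by (simp add: R \<mu>_def sinh_add sinh_diff hy field_simps)
  have vec: "p - R *\<^sub>R q = \<mu> *\<^sub>R c"
  proof -
    have sb: "s * b = \<alpha> + \<phi>" and se: "s * e = \<alpha> + \<theta>" by (simp_all add: \<alpha>_def \<phi>_def \<theta>_def)
    have "p - R *\<^sub>R q = (cosh (\<alpha> + \<phi>) - R * cosh (\<alpha> + \<theta>)) *\<^sub>R c0 + ((sinh (\<alpha> + \<phi>) - R * sinh (\<alpha> + \<theta>)) / s) *\<^sub>R v"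
    proof -
      have "p = cosh (\<alpha> + \<phi>) *\<^sub>R c0 + (sinh (\<alpha> + \<phi>) / s) *\<^sub>R v" by (simp add: pb \<gamma> sb)
      moreover have "q = cosh (\<alpha> + \<theta>) *\<^sub>R c0 + (sinh (\<alpha> + \<theta>) / s) *\<^sub>R v" by (simp add: qe \<gamma> se)
      ultimately show ?thesis by (simp add: algebra_simps diff_divide_distrib)
    qed
    also have "\<dots> = (\<mu> * cosh \<alpha>) *\<^sub>R c0 + ((\<mu> * sinh \<alpha>) / s) *\<^sub>R v" by (simp only: co si)
    also have "\<dots> = \<mu> *\<^sub>R c" by (simp add: ca \<gamma> \<alpha>_def scaleR_add_right)
    finally show ?thesis .
  qed
  have qq: "lor q q = 1/k" using q_in S by blast
  have key: "1/k - lor q x > 0 \<and> f x - R = \<mu> * (lor c q - lor c x) / (1/k - lor q x)"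
    if x: "x \<in> space_form k" and xq: "x \<noteq> q" for x
  proof -
    have "0 < lor (q - x) (q - x)" using sep(2)[OF q_in x] xq by simp
    then have dpos: "1/k - lor q x > 0" using lxy[OF q_in x] by simp
    have "f x = (lor p q - lor p x) / (1/k - lor q x)"
      unfolding f_def using x p_in q_in by (simp add: mdist)
    then have "f x - R = (lor p q - lor p x - R * (lor q q - lor q x)) / (1/k - lor q x)"
      using dpos qq by (simp add: field_simps)
    also have "lor p q - lor p x - R * (lor q q - lor q x) = lor (p - R *\<^sub>R q) (q - x)"
      by (simp add: lor_simps algebra_simps)
    also have "\<dots> = \<mu> * (lor c q - lor c x)" by (simp add: vec lor_simps algebra_simps)
    finally show ?thesis using dpos by simp
  qed
  have cmp: "(sf_dist k c x < r \<longleftrightarrow> lor c q - lor c x < 0) \<and> (sf_dist k c x > r \<longleftrightarrow> lor c q - lor c x > 0)"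
    if x: "x \<in> space_form k" for x
  proof
    have rr: "r = arcosh (k * lor c q) / s" using q_bdry by (simp add: dist)
    have A: "1 \<le> k * lor c x" "1 \<le> k * lor c q"
      by (rule cs[OF c_in x], rule cs[OF c_in q_in])
    have "sf_dist k c x < r \<longleftrightarrow> arcosh (k * lor c x) < arcosh (k * lor c q)"
      using s(1) by (simp add: rr dist divide_less_cancel)
    also have "\<dots> \<longleftrightarrow> k * lor c x < k * lor c q" using A by simp
    also have "\<dots> \<longleftrightarrow> lor c q - lor c x < 0" using k by simp
    finally show "sf_dist k c x < r \<longleftrightarrow> lor c q - lor c x < 0" .
    have "sf_dist k c x > r \<longleftrightarrow> arcosh (k * lor c q) < arcosh (k * lor c x)"
      using s(1) by (simp add: rr dist divide_less_cancel)
    also have "\<dots> \<longleftrightarrow> k * lor c q < k * lor c x" using A by simp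
    also have "\<dots> \<longleftrightarrow> lor c q - lor c x > 0" using k by simp
    finally show "sf_dist k c x > r \<longleftrightarrow> lor c q - lor c x > 0" .
  qed
  show ?thesis
    by (rule final_step[where \<mu>=\<mu> and h="\<lambda>x. lor c q - lor c x" and den="\<lambda>x. 1/k - lor q x"])
      (use \<mu> q_bdry key cmp in auto)
qed



lemma flat_case:
  fixes k r :: real and c p q :: "(real^'n) \<times> real"
  assumes k: "k = 0" and r_pos: "r > 0"
    and p_disk: "sf_dist k c p \<le> r"
    and q_bdry: "sf_dist k c q = r"
    and geod: "\<exists>\<gamma>. sf_geodesic k \<gamma> \<and> c \<in> range \<gamma> \<and> p \<in> range \<gamma> \<and> q \<in> range \<gamma>"
    and p_ne_q: "p \<noteq> q"
  defines "f \<equiv> (\<lambda>x. (m_k k (sf_dist k p x) - m_k k (sf_dist k p q)) / m_k k (sf_dist k q x))"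
    and "R \<equiv> deriv (m_k k) (r - sf_dist k p q) / deriv (m_k k) r"
  shows "(\<forall>x\<in>space_form k. sf_dist k c x = r \<and> x \<noteq> q \<longrightarrow> f x = R)
       \<and> (\<forall>x\<in>space_form k. sf_dist k c x < r \<longrightarrow> f x < R)
       \<and> (\<forall>x\<in>space_form k. sf_dist k c x > r \<longrightarrow> R < f x)"
proof -
  have dist: "\<And>x y. sf_dist k x y = dist x y" using k by (simp add: sf_dist_def)
  have mk: "\<And>t. m_k k t = t\<^sup>2 / 2" using k by (simp add: m_k_def)
  have dm: "deriv (m_k k) t = t" for t
  proof -
    have "m_k k = (\<lambda>t. t\<^sup>2 / 2)" using mk by auto
    moreover have "((\<lambda>t. t\<^sup>2 / 2) has_real_derivative t) (at t)"
      by (auto intro!: derivative_eq_intros)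
    ultimately show ?thesis by (simp add: DERIV_imp_deriv)
  qed
  obtain \<gamma> where g: "sf_geodesic k \<gamma>" and cr: "c \<in> range \<gamma>" and pr: "p \<in> range \<gamma>" and qr: "q \<in> range \<gamma>"
    using geod by blast
  from g obtain c0 v where H: "c0 \<in> space_form k \<and> (if k > 0 then c0 \<bullet> v = 0 \<and> v \<bullet> v = 1 \<and>
         \<gamma> = (\<lambda>s. cos (sqrt k * s) *\<^sub>R c0 + (sin (sqrt k * s) / sqrt k) *\<^sub>R v)
      else if k = 0 then snd v = 0 \<and> v \<bullet> v = 1 \<and> \<gamma> = (\<lambda>s. c0 + s *\<^sub>R v)
      else lor c0 v = 0 \<and> lor v v = 1 \<and>
         \<gamma> = (\<lambda>s. cosh (sqrt (- k) * s) *\<^sub>R c0 + (sinh (sqrt (- k) * s) / sqrt (- k)) *\<^sub>R v))"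
    unfolding sf_geodesic_def by blast
  have vv: "v \<bullet> v = 1" and \<gamma>: "\<gamma> = (\<lambda>t. c0 + t *\<^sub>R v)"
    using H by (simp_all only: k less_irrefl if_False if_True simp_thms)
  obtain a b e where ca: "c = \<gamma> a" and pb: "p = \<gamma> b" and qe: "q = \<gamma> e" using cr pr qr by blast
  have nv: "norm v = 1" using vv by (simp add: norm_eq_sqrt_inner)
  define \<phi> where "\<phi> = b - a"
  define \<theta> where "\<theta> = e - a"
  have pc: "p = c + \<phi> *\<^sub>R v" by (simp add: pb ca \<gamma> \<phi>_def algebra_simps)
  have qc: "q = c + \<theta> *\<^sub>R v" by (simp add: qe ca \<gamma> \<theta>_def algebra_simps)
  have cq: "\<bar>\<theta>\<bar> = r" using q_bdry by (simp add: dist qc dist_norm nv)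
  have cp: "\<bar>\<phi>\<bar> \<le> r" using p_disk by (simp add: dist pc dist_norm nv)
  define \<delta> where "\<delta> = (if \<theta> \<ge> 0 then 1 else -1::real)"
  have \<delta>: "\<theta> = \<delta> * r" "\<delta> * \<delta> = 1" "\<bar>\<delta>\<bar> = 1" using cq by (auto simp: \<delta>_def)
  define \<sigma> where "\<sigma> = \<delta> * \<phi>"
  have \<phi>: "\<phi> = \<delta> * \<sigma>" using \<delta>(2) by (simp add: \<sigma>_def mult.assoc[symmetric])
  have dd: "\<delta> * (\<delta> * z) = z" for z using \<delta>(2) by (metis mult.assoc mult_1)
  have \<sigma>b: "\<bar>\<sigma>\<bar> \<le> r" using cp \<delta>(3) by (simp add: \<sigma>_def abs_mult)
  have d: "sf_dist k p q = r - \<sigma>"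
  proof -
    have "sf_dist k p q = \<bar>\<phi> - \<theta>\<bar>" by (simp add: dist pc qc dist_norm nv algebra_simps flip: scaleR_diff_left)
    also have "\<phi> - \<theta> = \<delta> * (\<sigma> - r)" by (simp add: \<phi> \<delta>(1) algebra_simps)
    also have "\<bar>\<dots>\<bar> = r - \<sigma>" using \<sigma>b \<delta>(3) by (simp add: abs_mult)
    finally show ?thesis .
  qed
  have sne: "\<sigma> \<noteq> r"
  proof
    assume "\<sigma> = r"
    then have "\<phi> = \<theta>" by (simp add: \<phi> \<delta>(1))
    then have "p = q" by (simp add: pc qc)
    then show False using p_ne_q by simp
  qed
  define \<mu> where "\<mu> = (r - \<sigma>) / r"
  have \<mu>: "\<mu> > 0" unfolding \<mu>_def using sne \<sigma>b r_pos by (intro divide_pos_pos) auto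
  have R: "R = \<sigma> / r" unfolding R_def dm d by simp
  have key: "(dist q x)\<^sup>2 > 0 \<and> f x - R = \<mu> * ((x - c) \<bullet> (x - c) - r\<^sup>2) / (dist q x)\<^sup>2"
    if xq: "x \<noteq> q" for x
  proof -
    define y where "y = x - c"
    define w where "w = v \<bullet> y"
    define Y where "Y = y \<bullet> y"
    have dpos: "(dist q x)\<^sup>2 > 0" using xq by simp
    have P: "(dist p x)\<^sup>2 = \<phi>\<^sup>2 - 2 * \<phi> * w + Y"
    proof -
      have "p - x = \<phi> *\<^sub>R v - y" by (simp add: pc y_def)
      then have "(dist p x)\<^sup>2 = (\<phi> *\<^sub>R v - y) \<bullet> (\<phi> *\<^sub>R v - y)"
        by (simp only: dist_norm power2_norm_eq_inner)
      then show ?thesis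
        by (simp add: inner_diff_left inner_diff_right vv w_def Y_def
            inner_commute power2_eq_square algebra_simps)
    qed
    have Q: "(dist q x)\<^sup>2 = \<theta>\<^sup>2 - 2 * \<theta> * w + Y"
    proof -
      have "q - x = \<theta> *\<^sub>R v - y" by (simp add: qc y_def)
      then have "(dist q x)\<^sup>2 = (\<theta> *\<^sub>R v - y) \<bullet> (\<theta> *\<^sub>R v - y)"
        by (simp only: dist_norm power2_norm_eq_inner)
      then show ?thesis
        by (simp add: inner_diff_left inner_diff_right vv w_def Y_def
            inner_commute power2_eq_square algebra_simps)
    qed
    have "f x = ((dist p x)\<^sup>2 - (r - \<sigma>)\<^sup>2) / (dist q x)\<^sup>2"
      unfolding f_def mk d by (simp add: dist)
    then have "f x - R = ((dist p x)\<^sup>2 - (r - \<sigma>)\<^sup>2 - R * (dist q x)\<^sup>2) / (dist q x)\<^sup>2"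
      using dpos by (simp add: field_simps)
    also have "(dist p x)\<^sup>2 - (r - \<sigma>)\<^sup>2 - R * (dist q x)\<^sup>2 = \<mu> * (Y - r\<^sup>2)"
      unfolding P Q R \<mu>_def \<phi> \<delta>(1) using r_pos \<delta>(2)
      by (simp add: field_simps power2_eq_square) (simp add: algebra_simps dd)
    finally show ?thesis using dpos by (simp add: Y_def y_def)
  qed
  have cmp: "(sf_dist k c x < r \<longleftrightarrow> (x - c) \<bullet> (x - c) - r\<^sup>2 < 0) \<and> (sf_dist k c x > r \<longleftrightarrow> (x - c) \<bullet> (x - c) - r\<^sup>2 > 0)"
    for x
  proof -
    have e: "sf_dist k c x = sqrt ((x - c) \<bullet> (x - c))" 
    proof -
      have "sf_dist k c x = norm (x - c)" by (metis dist dist_commute dist_norm)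
      then show ?thesis by (simp add: norm_eq_sqrt_inner)
    qed
    have rr: "r = sqrt (r\<^sup>2)" using r_pos by simp
    have 1: "sqrt ((x - c) \<bullet> (x - c)) < r \<longleftrightarrow> (x - c) \<bullet> (x - c) < r\<^sup>2"
      using real_sqrt_less_iff[of "(x - c) \<bullet> (x - c)" "r\<^sup>2"] r_pos by simp
    have 2: "r < sqrt ((x - c) \<bullet> (x - c)) \<longleftrightarrow> r\<^sup>2 < (x - c) \<bullet> (x - c)"
      using real_sqrt_less_iff[of "r\<^sup>2" "(x - c) \<bullet> (x - c)"] r_pos by simp
    show ?thesis by (simp add: e 1 2)
  qed
  show ?thesis
    by (rule final_step[where \<mu>=\<mu> and h="\<lambda>x. (x - c) \<bullet> (x - c) - r\<^sup>2" and den="\<lambda>x. (dist q x)\<^sup>2"])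
      (use \<mu> q_bdry key cmp in auto)
qed


theorem proposition3:
  fixes k r :: real and c p q :: "(real^'n) \<times> real"
  assumes r_pos: "r > 0"
    and r_le: "k > 0 \<longrightarrow> r \<le> pi / (2 * sqrt k)"
    and c_in: "c \<in> space_form k"
    and p_in: "p \<in> space_form k"
    and q_in: "q \<in> space_form k"
    and p_disk: "sf_dist k c p \<le> r"
    and q_bdry: "sf_dist k c q = r"
    and geod: "\<exists>\<gamma>. sf_geodesic k \<gamma> \<and> c \<in> range \<gamma> \<and> p \<in> range \<gamma> \<and> q \<in> range \<gamma>"
    and p_ne_q: "p \<noteq> q"
    and not_antipodal: "\<not> (k > 0 \<and> sf_dist k p q = pi / sqrt k)"
  defines "f \<equiv> (\<lambda>x. (m_k k (sf_dist k p x) - m_k k (sf_dist k p q)) / m_k k (sf_dist k q x))"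
    and "R \<equiv> deriv (m_k k) (r - sf_dist k p q) / deriv (m_k k) r"
  shows "(\<forall>x\<in>space_form k. sf_dist k c x = r \<and> x \<noteq> q \<longrightarrow> f x = R)
       \<and> (\<forall>x\<in>space_form k. sf_dist k c x < r \<longrightarrow> f x < R)
       \<and> (\<forall>x\<in>space_form k. sf_dist k c x > r \<longrightarrow> R < f x)"
  proof -
  consider "k > 0" | "k = 0" | "k < 0" by linarith
  then show ?thesis
  proof cases
    case 1
    have rl: "r \<le> pi / (2 * sqrt k)" using r_le 1 by simp
    have na: "sf_dist k p q \<noteq> pi / sqrt k" using not_antipodal 1 by simp
    show ?thesis unfolding f_def R_def
      by (rule sphere_case[OF 1 r_pos rl c_in p_in q_in p_disk q_bdry geod p_ne_q na])
  next
    case 2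
    show ?thesis unfolding f_def R_def
      by (rule flat_case[OF 2 r_pos p_disk q_bdry geod p_ne_q])
  next
    case 3
    show ?thesis unfolding f_def R_def
      by (rule hyp_case[OF 3 r_pos c_in p_in q_in p_disk q_bdry geod p_ne_q])
  qed
qed

end
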